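(* Let $C \subseteq \mathbb{F}_q^n$ be an arbitrary subspace over the finite field $\mathbb{F}_q$. Then $C$ is $\left(1+\frac{1}{q}\right)$-non-overlapping.
   Context: For a subspace $C \ne \{0\}$, $d(C) := \min_{u \in C\setminus\{0\}}\|u\|_0$, where $\|u\|_0$ is the number of nonzero coordinates. A subspace $C$ is $\alpha$-non-overlapping ($\alpha \ge 1$) if for any $u, v \in C$ linearly independent over $\mathbb{F}_q$, $|\mathrm{supp}(u)\cup\mathrm{supp}(v)| \ge \alpha\cdot d(C)$, where $\mathrm{supp}(u)$ is the set of nonzero coordinates of $u$. *)

theory Defs
  imports "HOL-Analysis.Analysis"
begin

definition supp :: "'a::zero ^ 'n \<Rightarrow> 'n set" where
  "supp u = {i. u $ i \<noteq> 0}"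

definition hamming_weight :: "'a::zero ^ 'n \<Rightarrow> nat" where
  "hamming_weight u = card (supp u)"

definition min_dist :: "('a::zero ^ 'n) set \<Rightarrow> nat" where
  "min_dist C = Min (hamming_weight ` (C - {0}))"

definition non_overlapping :: "real \<Rightarrow> ('a::field ^ 'n::finite) set \<Rightarrow> bool" where
  "non_overlapping \<alpha> C \<longleftrightarrow>
     (\<forall>u\<in>C. \<forall>v\<in>C. (u \<noteq> v \<and> vec.independent {u, v}) \<longrightarrow>
        real (card (supp u \<union> supp v)) \<ge> \<alpha> * real (min_dist C))"

end

theory Submission
  imports Defs
begin

lemma count_nonzero:
  fixes x y :: "'a::{finite,field}"
  assumes "x \<noteq> 0 \<or> y \<noteq> 0"
  shows "card {p::'a\<times>'a. fst p * x + snd p * y \<noteq> 0} = CARD('a) * CARD('a) - CARD('a)"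
proof -
  have Z: "card {p::'a\<times>'a. fst p * x + snd p * y = 0} = CARD('a)"
  proof (cases "x \<noteq> 0")
    case True
    have "{p::'a\<times>'a. fst p * x + snd p * y = 0} = (\<lambda>b. (- b * y / x, b)) ` UNIV"
    proof (rule set_eqI, rule iffI)
      fix p assume "p \<in> {p::'a\<times>'a. fst p * x + snd p * y = 0}"
      then have "fst p = - snd p * y / x" using True by (auto simp: field_simps eq_neg_iff_add_eq_0)
      then show "p \<in> (\<lambda>b. (- b * y / x, b)) ` UNIV" by (intro image_eqI[of _ _ "snd p"]) (auto simp: prod_eq_iff)
    qed (use True in \<open>auto simp: field_simps\<close>)
    moreover have "inj (\<lambda>b::'a. (- b * y / x, b))" by (auto simp: inj_def)
    ultimately show ?thesis by (simp add: card_image)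
  next
    case False
    then have y: "y \<noteq> 0" "x = 0" using assms by auto
    have "{p::'a\<times>'a. fst p * x + snd p * y = 0} = (\<lambda>a. (a, 0)) ` UNIV"
      using y by (auto simp: image_def)
    moreover have "inj (\<lambda>a::'a. (a, 0::'a))" by (auto simp: inj_def)
    ultimately show ?thesis by (simp add: card_image)
  qed
  have "{p::'a\<times>'a. fst p * x + snd p * y \<noteq> 0} = UNIV - {p. fst p * x + snd p * y = 0}" by auto
  then show ?thesis using Z by (simp add: card_Diff_subset card_cartesian_product[of "UNIV::'a set" "UNIV::'a set", unfolded UNIV_Times_UNIV])
qed

lemma indep_pair:
  fixes u v :: "'a::field ^ 'n::finite"
  assumes "u \<noteq> v" "vec.independent {u, v}" "a *s u + b *s v = 0"
  shows "a = 0 \<and> b = 0"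
proof (rule ccontr)
  assume H: "\<not> (a = 0 \<and> b = 0)"
  show False
  proof (cases "a = 0")
    case True
    then have "b \<noteq> 0" using H by auto
    then have "v = 0" using assms(3) True by simp
    then show False using assms(2) vec.dependent_zero by auto
  next
    case False
    have "a *s u = - (b *s v)" using assms(3) by (simp add: eq_neg_iff_add_eq_0)
    then have "(1/a) *s (a *s u) = (1/a) *s (- (b *s v))" by simp
    then have "u = (- b / a) *s v" using False
      by (simp add: vector_smult_assoc vec_eq_iff)
    then have "u \<in> vec.span {v}" by (metis vec.span_base vec.span_scale singletonI)
    moreover have "{u,v} - {u} = {v}" using assms(1) by auto
    ultimately have "u \<in> vec.span ({u,v} - {u})" by simp
    then have "vec.dependent {u,v}" unfolding vec.dependent_def by blast
    then show False using assms(2) by blast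
  qed
qed

theorem lemma2p6:
  fixes C :: "('a::{finite, field} ^ 'n::finite) set"
  assumes "vec.subspace C"
  shows "non_overlapping (1 + 1 / real CARD('a)) C"
  unfolding non_overlapping_def
proof (intro ballI impI, elim conjE)
  fix u v assume uC: "u \<in> C" and vC: "v \<in> C" and uv: "u \<noteq> v" and ind: "vec.independent {u, v}"
  define q where "q = CARD('a)"
  define d where "d = min_dist C"
  define S where "S = supp u \<union> supp v"
  define w where "w = (\<lambda>p::'a\<times>'a. fst p *s u + snd p *s v)"
  have q2: "q \<ge> 2" unfolding q_def
    using card_mono[of "UNIV::'a set" "{0,1}"] by simp
  have wC: "w p \<in> C" for p unfolding w_def
    using assms uC vC by (simp add: vec.subspace_add vec.subspace_scale)
  have wnz: "w p \<noteq> 0" if "p \<noteq> (0,0)" for p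
    using indep_pair[OF uv ind, of "fst p" "snd p"] that unfolding w_def
    by (cases p) auto
  have fin: "finite (hamming_weight ` (C - {0}))" by simp
  have wd: "hamming_weight (w p) \<ge> d" if "p \<noteq> (0,0)" for p
    unfolding d_def min_dist_def using wC wnz[OF that] fin by (intro Min_le) auto
  have "(\<Sum>p\<in>UNIV - {(0::'a,0::'a)}. d) \<le> (\<Sum>p\<in>UNIV - {(0::'a,0::'a)}. hamming_weight (w p))"
    using wd by (intro sum_mono) auto
  also have "\<dots> \<le> (\<Sum>p\<in>UNIV. hamming_weight (w p))"
    by (intro sum_mono2) auto
  also have "\<dots> = (\<Sum>p\<in>UNIV. \<Sum>i\<in>S. if w p $ i \<noteq> 0 then 1 else 0)"
  proof (intro sum.cong refl)
    fix p
    have "supp (w p) = {i\<in>S. w p $ i \<noteq> 0}"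
      unfolding S_def supp_def w_def by auto
    then show "hamming_weight (w p) = (\<Sum>i\<in>S. if w p $ i \<noteq> 0 then 1 else 0)"
      unfolding hamming_weight_def by (simp add: sum.If_cases Int_def)
  qed
  also have "\<dots> = (\<Sum>i\<in>S. \<Sum>p\<in>UNIV. if w p $ i \<noteq> 0 then 1 else 0)"
    by (rule sum.swap)
  also have "\<dots> = (\<Sum>i\<in>S. q * q - q)"
  proof (intro sum.cong refl)
    fix i assume "i \<in> S"
    then have "u $ i \<noteq> 0 \<or> v $ i \<noteq> 0" unfolding S_def supp_def by auto
    then have "card {p::'a\<times>'a. fst p * u $ i + snd p * v $ i \<noteq> 0} = q * q - q"
      unfolding q_def by (rule count_nonzero)
    moreover have "(\<Sum>p\<in>UNIV. if w p $ i \<noteq> 0 then 1 else 0) = card {p::'a\<times>'a. w p $ i \<noteq> 0}"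
      by (simp add: sum.If_cases)
    ultimately show "(\<Sum>p\<in>UNIV. if w p $ i \<noteq> 0 then 1 else (0::nat)) = q * q - q"
      unfolding w_def by simp
  qed
  finally have "(q * q - 1) * d \<le> card S * (q * q - q)"
    by (simp add: card_cartesian_product[of "UNIV::'a set" "UNIV::'a set", unfolded UNIV_Times_UNIV] q_def)
  then have "(q - 1) * ((q + 1) * d) \<le> (q - 1) * (card S * q)"
    using q2 by (simp add: algebra_simps diff_mult_distrib diff_mult_distrib2)
  then have "(q + 1) * d \<le> card S * q" using q2 by simp
  then have "real (q + 1) * real d \<le> real (card S) * real q"
    by (metis of_nat_le_iff of_nat_mult)
  then show "(1 + 1 / real CARD('a)) * real (min_dist C) \<le> real (card (supp u \<union> supp v))"
    using q2 unfolding q_def[symmetric] d_def[symmetric] S_def[symmetric]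
    by (simp add: field_simps)
qed

end
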